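(* Let $\mathbf{x}$ be an amalgamation try, $G_\ell = G_{\mathbf{x},\ell}$ for $\ell = 0,1,2$, and $G_3 = G_{\mathbf{x}}$. Let $H_1$ be a subgroup of $G_1$, $H_0 = H_1 \cap G_0$, $H_1' = \mathbf{j}_{\mathbf{x},1}(H_1)$, and $\mathbf{I}_1 = \mathbf{I}_{\mathbf{x},1} \cap H_1$. Let $H_2$ be a subgroup of $G_2$, $H_2' = \mathbf{j}_{\mathbf{x},2}(H_2)$ and $\mathbf{I}_2 = \mathbf{I}_{\mathbf{x},2} \cap H_2$. Assume: (e) $H_1 = \bigcup\{bH_0 : b \in \mathbf{I}_1\}$; (f) if $g \in \mathbf{I}_{\mathbf{x},1}$ and $b \in \mathbf{I}_1$ then $gb \in \mathbf{I}_{\mathbf{x},1}$; (g) the subgroups $G_0$ and $H_1$ of $G_1$ commute elementwise; (h) $H_2$ commutes elementwise with $H_0$ in $G_2$; (i) $H_2 = \bigcup\{bH_0 : b \in \mathbf{I}_2\}$. Then the subgroups $H_1'$ and $H_2'$ of $G_3$ commute elementwise.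
   Context: A group is locally finite if every finitely generated subgroup is finite. An amalgamation try is $\mathbf{x} = (G_{\mathbf{x},0},G_{\mathbf{x},1},G_{\mathbf{x},2},\mathbf{I}_{\mathbf{x},1},\mathbf{I}_{\mathbf{x},2})$ where $G_{\mathbf{x},1},G_{\mathbf{x},2}$ are locally finite groups with common subgroup $G_{\mathbf{x},0}$, $\mathbf{I}_{\mathbf{x},\ell}$ is a set of representatives (without repetition) of the left cosets of $G_{\mathbf{x},0}$ in $G_{\mathbf{x},\ell}$, and $e \in \mathbf{I}_{\mathbf{x},1}\cap\mathbf{I}_{\mathbf{x},2}$. With $\mathcal{U}_{\mathbf{x}} = \{(g_0,g_1,g_2): g_0 \in G_{\mathbf{x},0}, g_\ell \in \mathbf{I}_{\mathbf{x},\ell}\}$, for $g \in G_{\mathbf{x},1}$ the permutation $\mathbf{j}_{\mathbf{x},1}(g)$ maps $(g_0,g_1,g_2)$ to $(g_0',g_1',g_2)$ where $(g_1',g_0') \in \mathbf{I}_{\mathbf{x},1}\times G_{\mathbf{x},0}$ is unique with $g_1'g_0' = g_1g_0g$; symmetrically $\mathbf{j}_{\mathbf{x},2}(g)$ for $g \in G_{\mathbf{x},2}$ maps $(g_0,g_1,g_2)$ to $(g_0',g_1,g_2')$ with $g_2'g_0' = g_2g_0g$. Permutations act on the right (product $f_1f_2$ is $u \mapsto f_2(f_1(u))$) and $G_{\mathbf{x}}$ is the permutation group on $\mathcal{U}_{\mathbf{x}}$ generated by $\mathbf{j}_{\mathbf{x},1}(G_{\mathbf{x},1}) \cup \mathbf{j}_{\mathbf{x},2}(G_{\mathbf{x},2})$.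 *)

theory Defs
  imports "HOL-Algebra.Algebra"
begin

definition locally_finite :: "('a, 'b) monoid_scheme \<Rightarrow> bool" where
  "locally_finite G \<longleftrightarrow> group G \<and>
     (\<forall>S. S \<subseteq> carrier G \<and> finite S \<longrightarrow> finite (generate G S))"

definition left_coset_reps :: "('a, 'b) monoid_scheme \<Rightarrow> 'a set \<Rightarrow> 'a set \<Rightarrow> bool" where
  "left_coset_reps G H I \<longleftrightarrow> I \<subseteq> carrier G \<and>
     (\<forall>g \<in> carrier G. \<exists>!b. b \<in> I \<and> g \<in> b <#\<^bsub>G\<^esub> H)"

text \<open>Amalgamation try x = (G0, G1, G2, I1, I2); G0 is given as a common subset
  which is a subgroup of both G1 and G2 with the same operation.\<close>
definition amalg_try ::
  "'a set \<Rightarrow> ('a, 'b) monoid_scheme \<Rightarrow> ('a, 'c) monoid_scheme \<Rightarrow> 'a set \<Rightarrow> 'a set \<Rightarrow> bool" where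
  "amalg_try G0 G1 G2 I1 I2 \<longleftrightarrow>
     locally_finite G1 \<and> locally_finite G2 \<and>
     subgroup G0 G1 \<and> subgroup G0 G2 \<and>
     (\<forall>x \<in> G0. \<forall>y \<in> G0. x \<otimes>\<^bsub>G1\<^esub> y = x \<otimes>\<^bsub>G2\<^esub> y) \<and>
     left_coset_reps G1 G0 I1 \<and> left_coset_reps G2 G0 I2 \<and>
     \<one>\<^bsub>G1\<^esub> \<in> I1 \<and> \<one>\<^bsub>G2\<^esub> \<in> I2"

definition amalg_U :: "'a set \<Rightarrow> 'a set \<Rightarrow> 'a set \<Rightarrow> ('a \<times> 'a \<times> 'a) set" where
  "amalg_U G0 I1 I2 = {(g0, g1, g2). g0 \<in> G0 \<and> g1 \<in> I1 \<and> g2 \<in> I2}"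

text \<open>j_{x,1}(g): (g0,g1,g2) |-> (g0',g1',g2) with g1' g0' = g1 g0 g, g1' in I1, g0' in G0.
  Represented as a permutation of U in the sense of BijGroup (extensional outside U).\<close>
definition amalg_j1 ::
  "'a set \<Rightarrow> ('a, 'b) monoid_scheme \<Rightarrow> 'a set \<Rightarrow> 'a set \<Rightarrow> 'a \<Rightarrow> ('a \<times> 'a \<times> 'a \<Rightarrow> 'a \<times> 'a \<times> 'a)" where
  "amalg_j1 G0 G1 I1 I2 g = (\<lambda>u \<in> amalg_U G0 I1 I2.
     (case u of (g0, g1, g2) \<Rightarrow>
       (let p = (THE p. fst p \<in> I1 \<and> snd p \<in> G0 \<and>
                        fst p \<otimes>\<^bsub>G1\<^esub> snd p = g1 \<otimes>\<^bsub>G1\<^esub> g0 \<otimes>\<^bsub>G1\<^esub> g)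
        in (snd p, fst p, g2))))"

definition amalg_j2 ::
  "'a set \<Rightarrow> ('a, 'b) monoid_scheme \<Rightarrow> 'a set \<Rightarrow> 'a set \<Rightarrow> 'a \<Rightarrow> ('a \<times> 'a \<times> 'a \<Rightarrow> 'a \<times> 'a \<times> 'a)" where
  "amalg_j2 G0 G2 I1 I2 g = (\<lambda>u \<in> amalg_U G0 I1 I2.
     (case u of (g0, g1, g2) \<Rightarrow>
       (let p = (THE p. fst p \<in> I2 \<and> snd p \<in> G0 \<and>
                        fst p \<otimes>\<^bsub>G2\<^esub> snd p = g2 \<otimes>\<^bsub>G2\<^esub> g0 \<otimes>\<^bsub>G2\<^esub> g)
        in (snd p, g1, fst p))))"

text \<open>G_x: the permutation group on U generated by j1(G1) and j2(G2).
  (BijGroup multiplies by composition; the paper uses the opposite order, which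
  is irrelevant for elementwise commutation.)\<close>
definition amalg_group ::
  "'a set \<Rightarrow> ('a, 'b) monoid_scheme \<Rightarrow> ('a, 'c) monoid_scheme \<Rightarrow> 'a set \<Rightarrow> 'a set
     \<Rightarrow> ('a \<times> 'a \<times> 'a \<Rightarrow> 'a \<times> 'a \<times> 'a) monoid" where
  "amalg_group G0 G1 G2 I1 I2 =
     (BijGroup (amalg_U G0 I1 I2)) \<lparr> carrier :=
        generate (BijGroup (amalg_U G0 I1 I2))
          (amalg_j1 G0 G1 I1 I2 ` carrier G1 \<union> amalg_j2 G0 G2 I1 I2 ` carrier G2) \<rparr>"

end

theory Submission
  imports Defs
begin

lemma reps_ex:
  assumes "left_coset_reps G K I" "x \<in> carrier G"
  shows "\<exists>i\<in>I. \<exists>k\<in>K. i \<otimes>\<^bsub>G\<^esub> k = x"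
proof -
  from assms obtain b where "b \<in> I" "x \<in> b <#\<^bsub>G\<^esub> K"
    unfolding left_coset_reps_def by blast
  then show ?thesis unfolding l_coset_def by blast
qed

lemma reps_uniq:
  assumes "group G" "subgroup K G" "left_coset_reps G K I"
    "i \<in> I" "i' \<in> I" "k \<in> K" "k' \<in> K" "i \<otimes>\<^bsub>G\<^esub> k = i' \<otimes>\<^bsub>G\<^esub> k'"
  shows "i = i' \<and> k = k'"
proof -
  interpret group G by fact
  have IG: "I \<subseteq> carrier G" using assms(3) unfolding left_coset_reps_def by blast
  have KG: "K \<subseteq> carrier G" using assms(2) subgroup.subset by blast
  have c: "i \<otimes>\<^bsub>G\<^esub> k \<in> carrier G" using assms IG KG by (meson m_closed subsetD)
  have m: "i \<otimes>\<^bsub>G\<^esub> k \<in> i <#\<^bsub>G\<^esub> K" using assms(6) unfolding l_coset_def by blast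
  have m2: "i \<otimes>\<^bsub>G\<^esub> k \<in> i' <#\<^bsub>G\<^esub> K"
    unfolding assms(8) using assms(7) unfolding l_coset_def by blast
  have ii: "i = i'" using assms(3) c m m2 assms(4,5) unfolding left_coset_reps_def by metis
  have "k = k'" using assms(4-8) IG KG ii l_cancel[of i k k'] by (meson subsetD)
  with ii show ?thesis by simp
qed
lemma j1_eq:
  assumes x: "amalg_try G0 G1 G2 I1 I2"
    and "g0 \<in> G0" "g1 \<in> I1" "g2 \<in> I2" "i \<in> I1" "k \<in> G0"
    "i \<otimes>\<^bsub>G1\<^esub> k = g1 \<otimes>\<^bsub>G1\<^esub> g0 \<otimes>\<^bsub>G1\<^esub> g"
  shows "amalg_j1 G0 G1 I1 I2 g (g0,g1,g2) = (k,i,g2)"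
proof -
  have gr: "group G1" "subgroup G0 G1" "left_coset_reps G1 G0 I1"
    using x unfolding amalg_try_def locally_finite_def by auto
  have "(THE p. fst p \<in> I1 \<and> snd p \<in> G0 \<and>
                        fst p \<otimes>\<^bsub>G1\<^esub> snd p = g1 \<otimes>\<^bsub>G1\<^esub> g0 \<otimes>\<^bsub>G1\<^esub> g) = (i,k)"
  proof (rule the_equality)
    fix p assume "fst p \<in> I1 \<and> snd p \<in> G0 \<and>
                        fst p \<otimes>\<^bsub>G1\<^esub> snd p = g1 \<otimes>\<^bsub>G1\<^esub> g0 \<otimes>\<^bsub>G1\<^esub> g"
    then show "p = (i,k)" using reps_uniq[OF gr, of "fst p" i "snd p" k] assms
      by (cases p) auto
  qed (use assms in auto)
  then show ?thesis using assms unfolding amalg_j1_def amalg_U_def by simp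
qed

lemma j2_eq:
  assumes x: "amalg_try G0 G1 G2 I1 I2"
    and "g0 \<in> G0" "g1 \<in> I1" "g2 \<in> I2" "i \<in> I2" "k \<in> G0"
    "i \<otimes>\<^bsub>G2\<^esub> k = g2 \<otimes>\<^bsub>G2\<^esub> g0 \<otimes>\<^bsub>G2\<^esub> g"
  shows "amalg_j2 G0 G2 I1 I2 g (g0,g1,g2) = (k,g1,i)"
proof -
  have gr: "group G2" "subgroup G0 G2" "left_coset_reps G2 G0 I2"
    using x unfolding amalg_try_def locally_finite_def by auto
  have "(THE p. fst p \<in> I2 \<and> snd p \<in> G0 \<and>
                        fst p \<otimes>\<^bsub>G2\<^esub> snd p = g2 \<otimes>\<^bsub>G2\<^esub> g0 \<otimes>\<^bsub>G2\<^esub> g) = (i,k)"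
  proof (rule the_equality)
    fix p assume "fst p \<in> I2 \<and> snd p \<in> G0 \<and>
                        fst p \<otimes>\<^bsub>G2\<^esub> snd p = g2 \<otimes>\<^bsub>G2\<^esub> g0 \<otimes>\<^bsub>G2\<^esub> g"
    then show "p = (i,k)" using reps_uniq[OF gr, of "fst p" i "snd p" k] assms
      by (cases p) auto
  qed (use assms in auto)
  then show ?thesis using assms unfolding amalg_j2_def amalg_U_def by simp
qed


lemma trygrp:
  assumes x: "amalg_try G0 G1 G2 I1 I2"
  shows "group G1" "group G2" "subgroup G0 G1" "subgroup G0 G2"
    "left_coset_reps G1 G0 I1" "left_coset_reps G2 G0 I2"
    "I1 \<subseteq> carrier G1" "I2 \<subseteq> carrier G2" "G0 \<subseteq> carrier G1" "G0 \<subseteq> carrier G2"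
    "\<And>a b. a \<in> G0 \<Longrightarrow> b \<in> G0 \<Longrightarrow> a \<otimes>\<^bsub>G1\<^esub> b = a \<otimes>\<^bsub>G2\<^esub> b"
  using x unfolding amalg_try_def locally_finite_def left_coset_reps_def
  by (auto dest: subgroup.subset)

lemma j1_props:
  assumes x: "amalg_try G0 G1 G2 I1 I2" and g: "g \<in> carrier G1" and u: "u \<in> amalg_U G0 I1 I2"
  shows "amalg_j1 G0 G1 I1 I2 g u \<in> amalg_U G0 I1 I2 \<and>
         amalg_j1 G0 G1 I1 I2 (inv\<^bsub>G1\<^esub> g) (amalg_j1 G0 G1 I1 I2 g u) = u"
proof -
  note T = trygrp[OF x]
  interpret G1: group G1 by (rule T(1))
  obtain g0 g1 g2 where uu: "u = (g0,g1,g2)" "g0 \<in> G0" "g1 \<in> I1" "g2 \<in> I2"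
    using u unfolding amalg_U_def by auto
  have c: "g0 \<in> carrier G1" "g1 \<in> carrier G1" using uu T by auto
  obtain i k where ik: "i \<in> I1" "k \<in> G0" "i \<otimes>\<^bsub>G1\<^esub> k = g1 \<otimes>\<^bsub>G1\<^esub> g0 \<otimes>\<^bsub>G1\<^esub> g"
    using reps_ex[OF T(5), of "g1 \<otimes>\<^bsub>G1\<^esub> g0 \<otimes>\<^bsub>G1\<^esub> g"] c g by auto
  have e1: "amalg_j1 G0 G1 I1 I2 g u = (k,i,g2)" using j1_eq[OF x] uu ik by simp
  have "g1 \<otimes>\<^bsub>G1\<^esub> g0 = i \<otimes>\<^bsub>G1\<^esub> k \<otimes>\<^bsub>G1\<^esub> inv\<^bsub>G1\<^esub> g"
    using ik(3) c g by (simp add: G1.m_assoc)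
  then have "amalg_j1 G0 G1 I1 I2 (inv\<^bsub>G1\<^esub> g) (k,i,g2) = (g0,g1,g2)"
    using j1_eq[OF x, of k i g2 g1 g0 "inv\<^bsub>G1\<^esub> g"] uu ik by simp
  with e1 uu ik show ?thesis unfolding amalg_U_def by simp
qed

lemma j2_props:
  assumes x: "amalg_try G0 G1 G2 I1 I2" and g: "g \<in> carrier G2" and u: "u \<in> amalg_U G0 I1 I2"
  shows "amalg_j2 G0 G2 I1 I2 g u \<in> amalg_U G0 I1 I2 \<and>
         amalg_j2 G0 G2 I1 I2 (inv\<^bsub>G2\<^esub> g) (amalg_j2 G0 G2 I1 I2 g u) = u"
proof -
  note T = trygrp[OF x]
  interpret G2: group G2 by (rule T(2))
  obtain g0 g1 g2 where uu: "u = (g0,g1,g2)" "g0 \<in> G0" "g1 \<in> I1" "g2 \<in> I2"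
    using u unfolding amalg_U_def by auto
  have c: "g0 \<in> carrier G2" "g2 \<in> carrier G2" using uu T by auto
  obtain i k where ik: "i \<in> I2" "k \<in> G0" "i \<otimes>\<^bsub>G2\<^esub> k = g2 \<otimes>\<^bsub>G2\<^esub> g0 \<otimes>\<^bsub>G2\<^esub> g"
    using reps_ex[OF T(6), of "g2 \<otimes>\<^bsub>G2\<^esub> g0 \<otimes>\<^bsub>G2\<^esub> g"] c g by auto
  have e1: "amalg_j2 G0 G2 I1 I2 g u = (k,g1,i)" using j2_eq[OF x] uu ik by simp
  have "g2 \<otimes>\<^bsub>G2\<^esub> g0 = i \<otimes>\<^bsub>G2\<^esub> k \<otimes>\<^bsub>G2\<^esub> inv\<^bsub>G2\<^esub> g"
    using ik(3) c g by (simp add: G2.m_assoc)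
  then have "amalg_j2 G0 G2 I1 I2 (inv\<^bsub>G2\<^esub> g) (k,g1,i) = (g0,g1,g2)"
    using j2_eq[OF x, of k g1 i g2 g0 "inv\<^bsub>G2\<^esub> g"] uu ik by simp
  with e1 uu ik show ?thesis unfolding amalg_U_def by simp
qed

lemma j1_Bij:
  assumes x: "amalg_try G0 G1 G2 I1 I2" and g: "g \<in> carrier G1"
  shows "amalg_j1 G0 G1 I1 I2 g \<in> Bij (amalg_U G0 I1 I2)"
proof -
  note T = trygrp[OF x]
  interpret G1: group G1 by (rule T(1))
  have gi: "inv\<^bsub>G1\<^esub> g \<in> carrier G1" "inv\<^bsub>G1\<^esub> (inv\<^bsub>G1\<^esub> g) = g" using g by auto
  have "bij_betw (amalg_j1 G0 G1 I1 I2 g) (amalg_U G0 I1 I2) (amalg_U G0 I1 I2)"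
    apply (rule bij_betw_byWitness[where f'="amalg_j1 G0 G1 I1 I2 (inv\<^bsub>G1\<^esub> g)"])
    using j1_props[OF x g] j1_props[OF x gi(1)] gi(2) by auto
  then show ?thesis unfolding Bij_def amalg_j1_def by simp
qed

lemma j2_Bij:
  assumes x: "amalg_try G0 G1 G2 I1 I2" and g: "g \<in> carrier G2"
  shows "amalg_j2 G0 G2 I1 I2 g \<in> Bij (amalg_U G0 I1 I2)"
proof -
  note T = trygrp[OF x]
  interpret G2: group G2 by (rule T(2))
  have gi: "inv\<^bsub>G2\<^esub> g \<in> carrier G2" "inv\<^bsub>G2\<^esub> (inv\<^bsub>G2\<^esub> g) = g" using g by auto
  have "bij_betw (amalg_j2 G0 G2 I1 I2 g) (amalg_U G0 I1 I2) (amalg_U G0 I1 I2)"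
    apply (rule bij_betw_byWitness[where f'="amalg_j2 G0 G2 I1 I2 (inv\<^bsub>G2\<^esub> g)"])
    using j2_props[OF x g] j2_props[OF x gi(1)] gi(2) by auto
  then show ?thesis unfolding Bij_def amalg_j2_def by simp
qed


lemma j1_step:
  assumes x: "amalg_try G0 G1 G2 I1 I2" and H1: "subgroup H1 G1"
    and f: "\<forall>g \<in> I1. \<forall>b \<in> I1 \<inter> H1. g \<otimes>\<^bsub>G1\<^esub> b \<in> I1"
    and g: "\<forall>a \<in> G0. \<forall>b \<in> H1. a \<otimes>\<^bsub>G1\<^esub> b = b \<otimes>\<^bsub>G1\<^esub> a"
    and b: "b \<in> I1 \<inter> H1" and h0: "h0 \<in> H1 \<inter> G0"
    and y: "y \<in> G0" "g1 \<in> I1" "g2 \<in> I2"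
  shows "amalg_j1 G0 G1 I1 I2 (b \<otimes>\<^bsub>G1\<^esub> h0) (y,g1,g2) = (h0 \<otimes>\<^bsub>G1\<^esub> y, g1 \<otimes>\<^bsub>G1\<^esub> b, g2)"
proof -
  note T = trygrp[OF x]
  interpret G1: group G1 by (rule T(1))
  have H1c: "H1 \<subseteq> carrier G1" using H1 subgroup.subset by blast
  have c: "b \<in> carrier G1" "h0 \<in> carrier G1" "y \<in> carrier G1" "g1 \<in> carrier G1"
    using b h0 y T H1c by auto
  have hH: "b \<otimes>\<^bsub>G1\<^esub> h0 \<in> H1" using b h0 H1 by (simp add: subgroup.m_closed)
  have comm: "y \<otimes>\<^bsub>G1\<^esub> (b \<otimes>\<^bsub>G1\<^esub> h0) = (b \<otimes>\<^bsub>G1\<^esub> h0) \<otimes>\<^bsub>G1\<^esub> y"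
    using g y hH by blast
  have "(g1 \<otimes>\<^bsub>G1\<^esub> b) \<otimes>\<^bsub>G1\<^esub> (h0 \<otimes>\<^bsub>G1\<^esub> y) = g1 \<otimes>\<^bsub>G1\<^esub> ((b \<otimes>\<^bsub>G1\<^esub> h0) \<otimes>\<^bsub>G1\<^esub> y)"
    using c by (simp add: G1.m_assoc)
  also have "\<dots> = g1 \<otimes>\<^bsub>G1\<^esub> y \<otimes>\<^bsub>G1\<^esub> (b \<otimes>\<^bsub>G1\<^esub> h0)"
    using c comm by (simp add: G1.m_assoc)
  finally have eq: "(g1 \<otimes>\<^bsub>G1\<^esub> b) \<otimes>\<^bsub>G1\<^esub> (h0 \<otimes>\<^bsub>G1\<^esub> y) = g1 \<otimes>\<^bsub>G1\<^esub> y \<otimes>\<^bsub>G1\<^esub> (b \<otimes>\<^bsub>G1\<^esub> h0)" .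
  have m: "g1 \<otimes>\<^bsub>G1\<^esub> b \<in> I1" using f y b by blast
  have m2: "h0 \<otimes>\<^bsub>G1\<^esub> y \<in> G0" using h0 y T(3) by (simp add: subgroup.m_closed)
  show ?thesis using j1_eq[OF x y m m2 eq] .
qed

theorem claim4p1:
  fixes G0 :: "'a set" and G1 :: "('a, 'b) monoid_scheme" and G2 :: "('a, 'c) monoid_scheme"
    and I1 I2 H1 H2 :: "'a set"
  assumes x: "amalg_try G0 G1 G2 I1 I2"
    and H1: "subgroup H1 G1"
    and H2: "subgroup H2 G2"
    and e: "H1 = (\<Union>b \<in> I1 \<inter> H1. b <#\<^bsub>G1\<^esub> (H1 \<inter> G0))"
    and f: "\<forall>g \<in> I1. \<forall>b \<in> I1 \<inter> H1. g \<otimes>\<^bsub>G1\<^esub> b \<in> I1"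
    and g: "\<forall>a \<in> G0. \<forall>b \<in> H1. a \<otimes>\<^bsub>G1\<^esub> b = b \<otimes>\<^bsub>G1\<^esub> a"
    and h: "\<forall>a \<in> H2. \<forall>b \<in> H1 \<inter> G0. a \<otimes>\<^bsub>G2\<^esub> b = b \<otimes>\<^bsub>G2\<^esub> a"
    and i: "H2 = (\<Union>b \<in> I2 \<inter> H2. b <#\<^bsub>G2\<^esub> (H1 \<inter> G0))"
  shows "\<forall>a \<in> amalg_j1 G0 G1 I1 I2 ` H1. \<forall>c \<in> amalg_j2 G0 G2 I1 I2 ` H2.
           a \<otimes>\<^bsub>amalg_group G0 G1 G2 I1 I2\<^esub> c = c \<otimes>\<^bsub>amalg_group G0 G1 G2 I1 I2\<^esub> a"
  proof (intro ballI)
  note T = trygrp[OF x]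
  interpret G1: group G1 by (rule T(1))
  interpret G2: group G2 by (rule T(2))
  let ?U = "amalg_U G0 I1 I2"
  fix a c assume a: "a \<in> amalg_j1 G0 G1 I1 I2 ` H1" and c: "c \<in> amalg_j2 G0 G2 I1 I2 ` H2"
  then obtain h k where hk: "h \<in> H1" "k \<in> H2" and ac: "a = amalg_j1 G0 G1 I1 I2 h" "c = amalg_j2 G0 G2 I1 I2 k"
    by blast
  have H1c: "H1 \<subseteq> carrier G1" using H1 subgroup.subset by blast
  have H2c: "H2 \<subseteq> carrier G2" using H2 subgroup.subset by blast
  have aB: "a \<in> Bij ?U" using j1_Bij[OF x] ac hk H1c by blast
  have cB: "c \<in> Bij ?U" using j2_Bij[OF x] ac hk H2c by blast
  from hk(1) obtain b h0 where bh: "b \<in> I1 \<inter> H1" "h0 \<in> H1 \<inter> G0" "h = b \<otimes>\<^bsub>G1\<^esub> h0"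
    using e unfolding l_coset_def by blast
  have kc: "k \<in> carrier G2" using hk H2c by blast
  have h0c: "h0 \<in> G0" "h0 \<in> carrier G2" using bh T by auto
  have pt: "a (c u) = c (a u)" if u: "u \<in> ?U" for u
  proof -
    obtain g0 g1 g2 where uu: "u = (g0,g1,g2)" "g0 \<in> G0" "g1 \<in> I1" "g2 \<in> I2"
      using u unfolding amalg_U_def by auto
    have cc: "g0 \<in> carrier G2" "g2 \<in> carrier G2" using uu T by auto
    obtain i2 k2 where ik: "i2 \<in> I2" "k2 \<in> G0" "i2 \<otimes>\<^bsub>G2\<^esub> k2 = g2 \<otimes>\<^bsub>G2\<^esub> g0 \<otimes>\<^bsub>G2\<^esub> k"
      using reps_ex[OF T(6), of "g2 \<otimes>\<^bsub>G2\<^esub> g0 \<otimes>\<^bsub>G2\<^esub> k"] cc kc by auto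
    have k2c: "k2 \<in> carrier G2" "i2 \<in> carrier G2" using ik T by auto
    have cu: "c u = (k2,g1,i2)" using j2_eq[OF x] uu ik ac by simp
    have acu: "a (c u) = (h0 \<otimes>\<^bsub>G1\<^esub> k2, g1 \<otimes>\<^bsub>G1\<^esub> b, i2)"
      using cu ac bh(3) j1_step[OF x H1 f g bh(1,2) ik(2) uu(3) ik(1)] by simp
    have au: "a u = (h0 \<otimes>\<^bsub>G1\<^esub> g0, g1 \<otimes>\<^bsub>G1\<^esub> b, g2)"
      using uu ac bh(3) j1_step[OF x H1 f g bh(1,2) uu(2,3,4)] by simp
    have m1: "h0 \<otimes>\<^bsub>G1\<^esub> k2 = h0 \<otimes>\<^bsub>G2\<^esub> k2" "h0 \<otimes>\<^bsub>G1\<^esub> g0 = h0 \<otimes>\<^bsub>G2\<^esub> g0"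
      using T(11) h0c ik uu by auto
    have cm1: "h0 \<otimes>\<^bsub>G2\<^esub> k2 = k2 \<otimes>\<^bsub>G2\<^esub> h0"
      using g ik(2) bh(2) T(11) h0c(1) by (metis IntD1)
    have cm2: "h0 \<otimes>\<^bsub>G2\<^esub> g0 = g0 \<otimes>\<^bsub>G2\<^esub> h0"
      using g uu(2) bh(2) T(11) h0c(1) by (metis IntD1)
    have cm3: "k \<otimes>\<^bsub>G2\<^esub> h0 = h0 \<otimes>\<^bsub>G2\<^esub> k" using h hk(2) bh(2) by blast
    have "i2 \<otimes>\<^bsub>G2\<^esub> (h0 \<otimes>\<^bsub>G2\<^esub> k2) = (i2 \<otimes>\<^bsub>G2\<^esub> k2) \<otimes>\<^bsub>G2\<^esub> h0"
      using cm1 k2c h0c by (simp add: G2.m_assoc)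
    also have "\<dots> = g2 \<otimes>\<^bsub>G2\<^esub> g0 \<otimes>\<^bsub>G2\<^esub> (k \<otimes>\<^bsub>G2\<^esub> h0)"
      using ik(3) cc kc h0c by (simp add: G2.m_assoc)
    also have "\<dots> = g2 \<otimes>\<^bsub>G2\<^esub> (g0 \<otimes>\<^bsub>G2\<^esub> h0) \<otimes>\<^bsub>G2\<^esub> k"
      using cm3 cc kc h0c by (simp add: G2.m_assoc)
    also have "\<dots> = g2 \<otimes>\<^bsub>G2\<^esub> (h0 \<otimes>\<^bsub>G2\<^esub> g0) \<otimes>\<^bsub>G2\<^esub> k"
      using cm2 by simp
    finally have eq: "i2 \<otimes>\<^bsub>G2\<^esub> (h0 \<otimes>\<^bsub>G2\<^esub> k2) = g2 \<otimes>\<^bsub>G2\<^esub> (h0 \<otimes>\<^bsub>G2\<^esub> g0) \<otimes>\<^bsub>G2\<^esub> k" .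
    have mem: "h0 \<otimes>\<^bsub>G2\<^esub> g0 \<in> G0" "h0 \<otimes>\<^bsub>G2\<^esub> k2 \<in> G0" "g1 \<otimes>\<^bsub>G1\<^esub> b \<in> I1"
      using T(4) h0c uu ik f bh(1) by (auto simp: subgroup.m_closed)
    have "c (a u) = (h0 \<otimes>\<^bsub>G2\<^esub> k2, g1 \<otimes>\<^bsub>G1\<^esub> b, i2)"
      using au m1 ac j2_eq[OF x mem(1) mem(3) uu(4) ik(1) mem(2) eq] by simp
    then show ?thesis using acu m1 by simp
  qed
  have "a \<otimes>\<^bsub>amalg_group G0 G1 G2 I1 I2\<^esub> c = compose ?U a c"
    using aB cB by (simp add: amalg_group_def BijGroup_def)
  also have "\<dots> = compose ?U c a" unfolding compose_def using pt by (intro restrict_ext) auto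
  also have "\<dots> = c \<otimes>\<^bsub>amalg_group G0 G1 G2 I1 I2\<^esub> a"
    using aB cB by (simp add: amalg_group_def BijGroup_def)
  finally show "a \<otimes>\<^bsub>amalg_group G0 G1 G2 I1 I2\<^esub> c = c \<otimes>\<^bsub>amalg_group G0 G1 G2 I1 I2\<^esub> a" .
qed

end
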